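(* Let $R$ be an integral domain with fraction field $K$ and $\mathcal O$ a valuation ring of $K$ such that the structure $(K;R,\mathcal O)$ (the field $K$ in the language of rings with unary predicates for $R$ and $\mathcal O$) is dp-minimal. Then $R\subseteq\mathcal O$ or $\mathcal O\subseteq R$. In particular this holds when $R$ is a dp-minimal domain and $\mathcal O$ is an externally definable valuation ring of $K$ in $(K;R)$.
   Context: Rings are commutative with identity; dp-minimal means the theory has dp-rank $1$. Externally definable: the trace on $K$ of a set definable with parameters in an elementary extension. *)

theory Defs
  imports Main
begin

datatype tm = Var nat | Zero | One | Add tm tm | Neg tm | Mul tm tm

datatype fm = Eq tm tm | Pred nat tm | Neg_fm fm | Conj fm fm | Ex nat fm

fun evt :: "(nat \<Rightarrow> 'a::comm_ring_1) \<Rightarrow> tm \<Rightarrow> 'a" where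
  "evt e (Var v) = e v"
| "evt e Zero = 0"
| "evt e One = 1"
| "evt e (Add s t) = evt e s + evt e t"
| "evt e (Neg t) = - evt e t"
| "evt e (Mul s t) = evt e s * evt e t"

text \<open>Satisfaction in the structure with universe U (closed under the ring operations
  of the ambient type), and unary predicates given by the list ps
  (Pred i refers to the i-th predicate; out-of-range indices are interpreted as false).\<close>
fun sat :: "'a::comm_ring_1 set \<Rightarrow> 'a set list \<Rightarrow> (nat \<Rightarrow> 'a) \<Rightarrow> fm \<Rightarrow> bool" where
  "sat U ps e (Eq s t) = (evt e s = evt e t)"
| "sat U ps e (Pred i t) = (i < length ps \<and> evt e t \<in> ps ! i)"
| "sat U ps e (Neg_fm f) = (\<not> sat U ps e f)"
| "sat U ps e (Conj f g) = (sat U ps e f \<and> sat U ps e g)"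
| "sat U ps e (Ex v f) = (\<exists>a\<in>U. sat U ps (e(v := a)) f)"

definition assignment_in :: "'a set \<Rightarrow> (nat \<Rightarrow> 'a) \<Rightarrow> bool" where
  "assignment_in U e \<longleftrightarrow> (\<forall>v. e v \<in> U)"

text \<open>Finite ict-pattern of depth 2 and length n in the single object variable 0:
  formulas phi(x; y), psi(x; z) (x = variable 0, the parameters are the other variables),
  parameter assignments b_0..b_{n-1}, c_0..c_{n-1} and witnesses a_ij with
  phi(a_ij, b_k) iff k = i and psi(a_ij, c_l) iff l = j.\<close>
definition ict2_pattern :: "'a::comm_ring_1 set \<Rightarrow> 'a set list \<Rightarrow> fm \<Rightarrow> fm \<Rightarrow> nat \<Rightarrow> bool" where
  "ict2_pattern U ps \<phi> \<psi> n \<longleftrightarrow>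
     (\<exists>b c :: nat \<Rightarrow> nat \<Rightarrow> 'a. \<exists>a :: nat \<Rightarrow> nat \<Rightarrow> 'a.
        (\<forall>k<n. assignment_in U (b k) \<and> assignment_in U (c k)) \<and>
        (\<forall>i<n. \<forall>j<n. a i j \<in> U \<and>
           (\<forall>k<n. sat U ps ((b k)(0 := a i j)) \<phi> \<longleftrightarrow> k = i) \<and>
           (\<forall>l<n. sat U ps ((c l)(0 := a i j)) \<psi> \<longleftrightarrow> l = j)))"

text \<open>dp-minimality: no ict-pattern of depth 2 in a single variable in a monster model
  of the theory; by compactness, equivalently, for every pair of formulas
  the finite patterns have bounded length in the structure itself.\<close>
definition dp_minimal :: "'a::comm_ring_1 set \<Rightarrow> 'a set list \<Rightarrow> bool" where
  "dp_minimal U ps \<longleftrightarrow> (\<forall>\<phi> \<psi>. \<exists>n. \<not> ict2_pattern U ps \<phi> \<psi> n)"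

text \<open>Externally definable subsets: traces on U of sets definable with parameters in an
  elementary extension; by compactness, equivalently X \<subseteq> U and some phi(x;y) such
  that every finite piece of X is cut out by an instance of phi with parameters in U.\<close>
definition externally_definable :: "'a::comm_ring_1 set \<Rightarrow> 'a set list \<Rightarrow> 'a set \<Rightarrow> bool" where
  "externally_definable U ps X \<longleftrightarrow> X \<subseteq> U \<and>
     (\<exists>\<phi>. \<forall>A. finite A \<and> A \<subseteq> U \<longrightarrow>
        (\<exists>e. assignment_in U e \<and> (\<forall>x\<in>A. x \<in> X \<longleftrightarrow> sat U ps (e(0 := x)) \<phi>)))"

definition subring_of :: "'a::field set \<Rightarrow> bool" where
  "subring_of R \<longleftrightarrow> 0 \<in> R \<and> 1 \<in> R \<and> (\<forall>x\<in>R. \<forall>y\<in>R. x + y \<in> R \<and> - x \<in> R \<and> x * y \<in> R)"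

definition fraction_field_of :: "'a::field set \<Rightarrow> bool" where
  "fraction_field_of R \<longleftrightarrow> subring_of R \<and> (\<forall>x. \<exists>r\<in>R. \<exists>s\<in>R. s \<noteq> 0 \<and> x = r / s)"

definition valuation_ring :: "'a::field set \<Rightarrow> bool" where
  "valuation_ring V \<longleftrightarrow> subring_of V \<and> (\<forall>x. x \<noteq> 0 \<longrightarrow> x \<in> V \<or> inverse x \<in> V)"

end

theory Submission imports Defs "HOL-Library.FuncSet" begin

definition inm :: "'a::field set \<Rightarrow> 'a \<Rightarrow> bool" where
  "inm V x \<longleftrightarrow> x \<in> V \<and> (x = 0 \<or> inverse x \<notin> V)"

lemma sr:
  assumes "subring_of R"
  shows sr0: "0 \<in> R" and sr1: "1 \<in> R"
    and sr_add: "x \<in> R \<Longrightarrow> y \<in> R \<Longrightarrow> x + y \<in> R"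
    and sr_neg: "x \<in> R \<Longrightarrow> - x \<in> R"
    and sr_mult: "x \<in> R \<Longrightarrow> y \<in> R \<Longrightarrow> x * y \<in> R"
    and sr_diff: "x \<in> R \<Longrightarrow> y \<in> R \<Longrightarrow> x - y \<in> R"
proof -
  show "0 \<in> R" "1 \<in> R" using assms unfolding subring_of_def by blast+
  show "x \<in> R \<Longrightarrow> y \<in> R \<Longrightarrow> x + y \<in> R" using assms unfolding subring_of_def by blast
  show "x \<in> R \<Longrightarrow> - x \<in> R" using assms unfolding subring_of_def by blast
  show "x \<in> R \<Longrightarrow> y \<in> R \<Longrightarrow> x * y \<in> R" using assms unfolding subring_of_def by blast
  show "x \<in> R \<Longrightarrow> y \<in> R \<Longrightarrow> x - y \<in> R"
  proof -
    assume "x \<in> R" "y \<in> R"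
    hence "x + - y \<in> R" using assms unfolding subring_of_def by blast
    thus ?thesis by simp
  qed
qed

lemma sr_pow: assumes "subring_of R" "x \<in> R" shows "x ^ n \<in> R"
  by (induction n) (use assms sr1 sr_mult in auto)

lemma vr_sub: "valuation_ring V \<Longrightarrow> subring_of V"
  by (simp add: valuation_ring_def)

lemma vr_inv: "valuation_ring V \<Longrightarrow> x \<notin> V \<Longrightarrow> inverse x \<in> V"
  unfolding valuation_ring_def subring_of_def by (cases "x = 0") auto

lemma inm_mult:
  assumes V: "valuation_ring V" and x: "inm V x" and y: "y \<in> V"
  shows "inm V (x * y)"
proof -
  have S: "subring_of V" using V by (rule vr_sub)
  have xy: "x * y \<in> V" using x y sr_mult[OF S] by (auto simp: inm_def)
  show ?thesis
  proof (cases "x = 0 \<or> y = 0")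
    case True thus ?thesis using xy by (auto simp: inm_def)
  next
    case False
    hence ix: "inverse x \<notin> V" using x by (auto simp: inm_def)
    have "inverse (x * y) \<notin> V"
    proof
      assume h: "inverse (x * y) \<in> V"
      have e: "inverse x = y * inverse (x * y)" using False by (simp add: field_simps)
      have "y * inverse (x * y) \<in> V" using sr_mult[OF S y h] .
      hence "inverse x \<in> V" using e by metis
      thus False using ix by simp
    qed
    thus ?thesis using xy by (simp add: inm_def)
  qed
qed

lemma inm_add:
  assumes V: "valuation_ring V" and x: "inm V x" and y: "inm V y"
  shows "inm V (x + y)"
proof -
  have S: "subring_of V" using V by (rule vr_sub)
  have xy: "x + y \<in> V" using x y sr_add[OF S] by (auto simp: inm_def)
  show ?thesis
  proof (cases "x = 0 \<or> y = 0 \<or> x + y = 0")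
    case True thus ?thesis using xy x y by (auto simp: inm_def)
  next
    case False
    hence ix: "inverse x \<notin> V" and iy: "inverse y \<notin> V" using x y by (auto simp: inm_def)
    have "inverse (x + y) \<notin> V"
    proof
      assume h: "inverse (x + y) \<in> V"
      show False
      proof (cases "x * inverse y \<in> V")
        case True
        have y0: "y \<noteq> 0" and s0: "x + y \<noteq> 0" using False by auto
        have eq: "inverse y = inverse (x + y) * (1 + x * inverse y)" using y0 s0
          by (simp add: field_simps)
        have "inverse (x + y) * (1 + x * inverse y) \<in> V"
          using sr_mult[OF S h sr_add[OF S sr1[OF S] True]] .
        hence "inverse y \<in> V" using eq by metis
        thus False using iy by simp
      next
        case F: False
        have "inverse (x * inverse y) \<in> V" using vr_inv[OF V F] .
        moreover have "inverse (x * inverse y) = y * inverse x"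
          by (simp add: inverse_mult_distrib mult.commute)
        ultimately have yx: "y * inverse x \<in> V" by metis
        have x0: "x \<noteq> 0" and s0: "x + y \<noteq> 0" using False by auto
        have eq: "inverse x = inverse (x + y) * (1 + y * inverse x)" using x0 s0
          by (simp add: field_simps)
        have "inverse (x + y) * (1 + y * inverse x) \<in> V"
          using sr_mult[OF S h sr_add[OF S sr1[OF S] yx]] .
        hence "inverse x \<in> V" using eq by metis
        thus False using ix by simp
      qed
    qed
    thus ?thesis using xy by (simp add: inm_def)
  qed
qed

lemma inm_unit:
  assumes V: "valuation_ring V" and x: "inm V x"
  shows "1 - x \<noteq> 0 \<and> inverse (1 - x) \<in> V"
proof -
  have S: "subring_of V" using V by (rule vr_sub)
  have n1: "\<not> inm V 1" using sr1[OF S] by (simp add: inm_def)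
  have ne: "1 - x \<noteq> 0" using x n1 by auto
  have m: "1 - x \<in> V" using x sr_diff[OF S] sr1[OF S] by (auto simp: inm_def)
  have "inverse (1 - x) \<in> V"
  proof (rule ccontr)
    assume "inverse (1 - x) \<notin> V"
    hence "inm V (1 - x)" using m by (simp add: inm_def)
    hence "inm V ((1 - x) + x)" using inm_add[OF V _ x] by blast
    thus False using n1 by simp
  qed
  thus ?thesis using ne by simp
qed

lemma inm_pow:
  assumes V: "valuation_ring V" and x: "inm V x" and n: "n \<ge> 1"
  shows "inm V (x ^ n)"
proof -
  have S: "subring_of V" using V by (rule vr_sub)
  have "x \<in> V" using x by (simp add: inm_def)
  hence "x ^ (n - 1) \<in> V" using sr_pow[OF S] by blast
  hence "inm V (x * x ^ (n - 1))" using inm_mult[OF V x] by blast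
  moreover have "x * x ^ (n - 1) = x ^ n" using n by (cases n) auto
  ultimately show ?thesis by simp
qed

lemma notin_inm:
  assumes V: "valuation_ring V" and a: "a \<notin> V"
  shows "inm V (inverse a)"
  using vr_inv[OF V a] a by (simp add: inm_def)

lemma pow_notin:
  assumes V: "valuation_ring V" and a: "a \<notin> V" and n: "n \<ge> 1"
  shows "a ^ n \<notin> V"
proof
  assume h: "a ^ n \<in> V"
  have S: "subring_of V" using V by (rule vr_sub)
  have a0: "a \<noteq> 0" using a sr0[OF S] by auto
  have t: "inverse a \<in> V" using vr_inv[OF V a] .
  have "a ^ n * inverse a ^ (n - 1) \<in> V" using sr_mult[OF S h sr_pow[OF S t]] .
  moreover have "a ^ n * inverse a ^ (n - 1) = a"
  proof -
    obtain m where m: "n = Suc m" using n by (cases n) auto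
    have "a ^ m \<noteq> 0" using a0 by simp
    hence "a * a ^ m * inverse (a ^ m) = a" by simp
    thus ?thesis unfolding m diff_Suc_1 power_Suc power_inverse .
  qed
  ultimately show False using a by simp
qed

lemma beta_diff:
  assumes V: "valuation_ring V" and a: "a \<notin> V" and jl: "j \<noteq> l"
  shows "a ^ Suc j - a ^ Suc l \<notin> V"
proof -
  have S: "subring_of V" using V by (rule vr_sub)
  have a0: "a \<noteq> 0" using a sr0[OF S] by auto
  have main: "a ^ Suc j - a ^ Suc l \<notin> V" if lj: "l < j" for j l
  proof
    assume h: "a ^ Suc j - a ^ Suc l \<in> V"
    define d where "d = j - l"
    have d1: "d \<ge> 1" using lj d_def by simp
    have u: "1 - inverse a ^ d \<noteq> 0 \<and> inverse (1 - inverse a ^ d) \<in> V"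
      using inm_unit[OF V inm_pow[OF V notin_inm[OF V a] d1]] .
    have eq: "a ^ Suc j - a ^ Suc l = a ^ Suc j * (1 - inverse a ^ d)"
    proof -
      have sj: "Suc j = Suc l + d" using lj d_def by simp
      have p1: "a ^ Suc j = a ^ Suc l * a ^ d" unfolding sj by (rule power_add)
      have "a ^ d * inverse (a ^ d) = 1" using a0 by simp
      hence ad: "a ^ d * inverse a ^ d = 1" unfolding power_inverse .
      have "a ^ Suc j * inverse a ^ d = a ^ Suc l * (a ^ d * inverse a ^ d)"
        unfolding p1 by (rule mult.assoc)
      hence p2: "a ^ Suc j * inverse a ^ d = a ^ Suc l" unfolding ad by (rule trans) (rule mult_1_right)
      have "a ^ Suc j * (1 - inverse a ^ d) = a ^ Suc j * 1 - a ^ Suc j * inverse a ^ d"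
        by (rule right_diff_distrib)
      thus ?thesis unfolding p2 mult_1_right by (rule sym)
    qed
    have "(a ^ Suc j - a ^ Suc l) * inverse (1 - inverse a ^ d)
       = a ^ Suc j * ((1 - inverse a ^ d) * inverse (1 - inverse a ^ d))"
      unfolding eq by (rule mult.assoc)
    also have "\<dots> = a ^ Suc j" using u by simp
    finally have e2: "(a ^ Suc j - a ^ Suc l) * inverse (1 - inverse a ^ d) = a ^ Suc j" .
    have "(a ^ Suc j - a ^ Suc l) * inverse (1 - inverse a ^ d) \<in> V"
      using sr_mult[OF S h] u by blast
    hence "a ^ Suc j \<in> V" unfolding e2 .
    thus False using pow_notin[OF V a, of "Suc j"] by simp
  qed
  show ?thesis
  proof (cases "l < j")
    case True thus ?thesis using main by blast
  next
    case False
    hence "j < l" using jl by simp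
    hence "a ^ Suc l - a ^ Suc j \<notin> V" using main by blast
    moreover have "a ^ Suc l - a ^ Suc j = - (a ^ Suc j - a ^ Suc l)" by simp
    ultimately show ?thesis using sr_neg[OF S, of "a ^ Suc j - a ^ Suc l"] by auto
  qed
qed


lemma antichain:
  fixes n :: nat and R V :: "'a::field set"
  assumes R: "subring_of R" and V: "valuation_ring V"
    and aR: "a \<in> R" and aV: "a \<notin> V" and bV: "b \<in> V" and bR: "b \<notin> R"
  shows "\<exists>\<alpha>::nat \<Rightarrow> 'a. (\<forall>i<n. \<alpha> i \<in> V) \<and> (\<forall>i<n. \<forall>k<n. i \<noteq> k \<longrightarrow> \<alpha> i - \<alpha> k \<notin> R)"
proof (rule ccontr)
  define P where "P m \<longleftrightarrow> (\<exists>\<alpha>::nat \<Rightarrow> 'a. (\<forall>i<m. \<alpha> i \<in> V) \<and> (\<forall>i<m. \<forall>k<m. i \<noteq> k \<longrightarrow> \<alpha> i - \<alpha> k \<notin> R))" for m :: nat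
  assume nP: "\<not> ?thesis"
  hence Pn: "\<not> P n" by (simp add: P_def)
  have P0: "P 0" by (simp add: P_def)
  have "\<exists>m. P m \<and> \<not> P (Suc m)"
  proof (rule ccontr)
    assume "\<not> ?thesis"
    hence st: "\<forall>m. P m \<longrightarrow> P (Suc m)" by blast
    have "P k" for k by (induction k) (use P0 st in auto)
    thus False using Pn by blast
  qed
  then obtain m \<alpha> where \<alpha>1: "\<forall>i<m. \<alpha> i \<in> V"
      and \<alpha>2: "\<forall>i<m. \<forall>k<m. i \<noteq> k \<longrightarrow> \<alpha> i - \<alpha> k \<notin> R" and nS: "\<not> P (Suc m)"
    unfolding P_def by blast
  define F where "F = \<alpha> ` {..<m}"
  have finF: "finite F" by (simp add: F_def)
  have FV: "F \<subseteq> V" using \<alpha>1 by (auto simp: F_def)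
  have cover: "\<exists>f\<in>F. z - f \<in> R" if zV: "z \<in> V" for z
  proof (rule ccontr)
    assume h: "\<not> (\<exists>f\<in>F. z - f \<in> R)"
    define \<beta> where "\<beta> = \<alpha>(m := z)"
    have "P (Suc m)" unfolding P_def
    proof (intro exI[of _ \<beta>] conjI allI impI)
      fix i assume "i < Suc m" thus "\<beta> i \<in> V" using \<alpha>1 zV by (auto simp: \<beta>_def less_Suc_eq)
    next
      fix i k assume ik: "i < Suc m" "k < Suc m" "i \<noteq> k"
      show "\<beta> i - \<beta> k \<notin> R"
      proof (cases "i = m")
        case True
        hence "k < m" using ik by auto
        thus ?thesis using True h ik by (auto simp: \<beta>_def F_def)
      next
        case False
        show ?thesis
        proof (cases "k = m")
          case True
          hence im: "i < m" using ik False by auto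
          have "z - \<alpha> i \<notin> R" using h im by (auto simp: F_def)
          moreover have "\<alpha> i - z \<in> R \<Longrightarrow> z - \<alpha> i \<in> R"
          proof -
            assume "\<alpha> i - z \<in> R"
            from sr_neg[OF R this] show ?thesis by simp
          qed
          ultimately have "\<alpha> i - z \<notin> R" by blast
          thus ?thesis using True False by (simp add: \<beta>_def)
        next
          case False2: False
          thus ?thesis using False ik \<alpha>2 by (auto simp: \<beta>_def less_Suc_eq)
        qed
      qed
    qed
    thus False using nS by blast
  qed
  have S: "subring_of V" by (rule vr_sub[OF V])
  define t where "t = inverse a"
  have tm: "inm V t" using notin_inm[OF V aV] t_def by simp
  have tV: "t \<in> V" using tm by (simp add: inm_def)
  have a0: "a \<noteq> 0" using aV sr0[OF S] by auto
  define g1 where "g1 k = (SOME f. f \<in> F \<and> t ^ Suc k - f \<in> R)" for k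
  have g1: "g1 k \<in> F \<and> t ^ Suc k - g1 k \<in> R" for k
  proof -
    have "t ^ Suc k \<in> V" using sr_pow[OF S tV] .
    then obtain f where "f \<in> F \<and> t ^ Suc k - f \<in> R" using cover by blast
    thus ?thesis unfolding g1_def by (rule someI)
  qed
  have "\<not> inj g1"
  proof
    assume "inj g1"
    hence "infinite (range g1)" using finite_imageD infinite_UNIV_nat by blast
    moreover have "range g1 \<subseteq> F" using g1 by auto
    ultimately show False using finF finite_subset by blast
  qed
  then obtain k0 l0 where kl0: "g1 k0 = g1 l0" "k0 \<noteq> l0" unfolding inj_def by blast
  have d0: "t ^ Suc k0 - t ^ Suc l0 \<in> R"
  proof -
    have "(t ^ Suc k0 - g1 k0) - (t ^ Suc l0 - g1 l0) \<in> R" using g1 sr_diff[OF R] by blast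
    thus ?thesis using kl0 by simp
  qed
  obtain k l where kl: "k < l" and ekl: "t ^ Suc k - t ^ Suc l \<in> R"
  proof (cases "k0 < l0")
    case True thus ?thesis using that d0 by blast
  next
    case False
    hence "l0 < k0" using kl0 by simp
    moreover have "t ^ Suc l0 - t ^ Suc k0 \<in> R"
    proof -
      have "- (t ^ Suc k0 - t ^ Suc l0) \<in> R" using sr_neg[OF R d0] .
      thus ?thesis by simp
    qed
    ultimately show ?thesis using that by blast
  qed
  define e where "e = t ^ Suc k - t ^ Suc l"
  have eR: "e \<in> R" using ekl e_def by simp
  have eV: "e \<in> V" unfolding e_def using sr_diff[OF S sr_pow[OF S tV] sr_pow[OF S tV]] .
  define G where "G j = restrict (\<lambda>f. SOME f'. f' \<in> F \<and> f * e ^ j - f' \<in> R) F" for j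
  have Gp: "G j f \<in> F \<and> f * e ^ j - G j f \<in> R" if fF: "f \<in> F" for f j
  proof -
    have "f * e ^ j \<in> V" using sr_mult[OF S _ sr_pow[OF S eV]] fF FV by blast
    then obtain f' where "f' \<in> F \<and> f * e ^ j - f' \<in> R" using cover by blast
    hence "(SOME f'. f' \<in> F \<and> f * e ^ j - f' \<in> R) \<in> F \<and>
           f * e ^ j - (SOME f'. f' \<in> F \<and> f * e ^ j - f' \<in> R) \<in> R" by (rule someI)
    thus ?thesis using fF by (simp add: G_def)
  qed
  have GF: "G j \<in> F \<rightarrow>\<^sub>E F" for j
  proof -
    have "G j \<in> extensional F" unfolding G_def by (rule restrict_extensional)
    moreover have "\<forall>f\<in>F. G j f \<in> F" using Gp by blast
    ultimately show ?thesis by (simp add: PiE_iff)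
  qed
  have "\<not> inj G"
  proof
    assume "inj G"
    hence "infinite (range G)" using finite_imageD infinite_UNIV_nat by blast
    moreover have "range G \<subseteq> F \<rightarrow>\<^sub>E F" using GF by auto
    moreover have "finite (F \<rightarrow>\<^sub>E F)" by (rule finite_PiE[OF finF finF])
    ultimately show False using finite_subset by blast
  qed
  then obtain i0 j0 where ij0: "G i0 = G j0" "i0 \<noteq> j0" unfolding inj_def by blast
  have d1: "f * e ^ i0 - f * e ^ j0 \<in> R" if "f \<in> F" for f
  proof -
    have "(f * e ^ i0 - G i0 f) - (f * e ^ j0 - G j0 f) \<in> R" using Gp[OF that] sr_diff[OF R] by blast
    thus ?thesis using ij0 by simp
  qed
  obtain i j where ij: "i < j" and eij: "\<And>f. f \<in> F \<Longrightarrow> f * e ^ i - f * e ^ j \<in> R"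
  proof (cases "i0 < j0")
    case True thus ?thesis using that d1 by blast
  next
    case False
    hence "j0 < i0" using ij0 by simp
    moreover have "f * e ^ j0 - f * e ^ i0 \<in> R" if "f \<in> F" for f
    proof -
      have "- (f * e ^ i0 - f * e ^ j0) \<in> R" using sr_neg[OF R d1[OF that]] .
      thus ?thesis by simp
    qed
    ultimately show ?thesis using that by blast
  qed
  define c where "c = e ^ i - e ^ j"
  have cR: "c \<in> R" unfolding c_def using sr_diff[OF R sr_pow[OF R eR] sr_pow[OF R eR]] .
  have cO: "c * z \<in> R" if zV: "z \<in> V" for z
  proof -
    obtain f where fF: "f \<in> F" and zf: "z - f \<in> R" using cover[OF zV] by blast
    have "c * z = (f * e ^ i - f * e ^ j) + c * (z - f)" unfolding c_def by (simp add: algebra_simps)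
    moreover have "(f * e ^ i - f * e ^ j) + c * (z - f) \<in> R"
      using sr_add[OF R eij[OF fF] sr_mult[OF R cR zf]] .
    ultimately show ?thesis by simp
  qed
  have lk1: "l - k \<ge> 1" using kl by simp
  define w where "w = 1 - t ^ (l - k)"
  have wu: "w \<noteq> 0 \<and> inverse w \<in> V" unfolding w_def using inm_unit[OF V inm_pow[OF V tm lk1]] .
  have e_eq: "e = t ^ Suc k * w"
  proof -
    have "Suc l = Suc k + (l - k)" using kl by simp
    hence "t ^ Suc l = t ^ Suc k * t ^ (l - k)" by (simp only: power_add)
    thus ?thesis unfolding e_def w_def by (simp add: right_diff_distrib)
  qed
  have ji1: "j - i \<ge> 1" using ij by simp
  have em: "inm V e"
  proof -
    have "inm V (t ^ Suc k)" by (rule inm_pow[OF V tm]) simp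
    moreover have "w \<in> V" unfolding w_def using sr_diff[OF S sr1[OF S] sr_pow[OF S tV]] .
    ultimately show ?thesis unfolding e_eq using inm_mult[OF V] by blast
  qed
  define q where "q = 1 - e ^ (j - i)"
  have qu: "q \<noteq> 0 \<and> inverse q \<in> V" unfolding q_def using inm_unit[OF V inm_pow[OF V em ji1]] .
  have c_eq: "c = e ^ i * q"
  proof -
    have "j = i + (j - i)" using ij by simp
    hence "e ^ j = e ^ i * e ^ (j - i)" by (metis power_add)
    thus ?thesis unfolding c_def q_def by (simp add: right_diff_distrib)
  qed
  define N where "N = Suc k * i"
  have ei: "e ^ i = t ^ N * w ^ i"
    unfolding e_eq N_def power_mult_distrib power_mult by (rule refl)
  have at: "a ^ N * t ^ N = 1"
  proof -
    have "a ^ N * t ^ N = (a * t) ^ N" by (simp add: power_mult_distrib)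
    also have "a * t = 1" using a0 t_def by simp
    finally show ?thesis by simp
  qed
  define u where "u = a ^ N * c"
  have uR: "u \<in> R" unfolding u_def using sr_mult[OF R sr_pow[OF R aR] cR] .
  have u_eq: "u = w ^ i * q"
  proof -
    have "u = (a ^ N * t ^ N) * (w ^ i * q)" unfolding u_def c_eq ei by (simp only: mult.assoc)
    thus ?thesis using at by simp
  qed
  have u0: "u \<noteq> 0" using u_eq wu qu by simp
  have iu: "inverse u \<in> V"
  proof -
    have "inverse u = inverse (w ^ i) * inverse q" unfolding u_eq by (rule inverse_mult_distrib)
    also have "inverse (w ^ i) = inverse w ^ i" by (rule power_inverse[symmetric])
    finally have iu_eq: "inverse u = inverse w ^ i * inverse q" .
    have iw: "inverse w \<in> V" using wu by blast
    have iq: "inverse q \<in> V" using qu by blast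
    show ?thesis unfolding iu_eq using sr_mult[OF S sr_pow[OF S iw] iq] .
  qed
  have ibV: "inverse u * b \<in> V" using sr_mult[OF S iu bV] .
  have "a ^ N * (c * (inverse u * b)) \<in> R" using sr_mult[OF R sr_pow[OF R aR] cO[OF ibV]] .
  moreover have "a ^ N * (c * (inverse u * b)) = b"
  proof -
    have "a ^ N * (c * (inverse u * b)) = u * inverse u * b" unfolding u_def by (simp only: mult.assoc)
    thus ?thesis using u0 by simp
  qed
  ultimately show False using bR by simp
qed


fun tr :: "tm \<Rightarrow> tm \<times> tm" where
  "tr (tm.Var v) = (tm.Var (4 * v + 4), tm.Var (4 * v + 5))"
| "tr tm.Zero = (tm.Zero, tm.One)"
| "tr tm.One = (tm.One, tm.One)"
| "tr (tm.Add s t) = (tm.Add (tm.Mul (fst (tr s)) (snd (tr t))) (tm.Mul (fst (tr t)) (snd (tr s))),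
                      tm.Mul (snd (tr s)) (snd (tr t)))"
| "tr (tm.Neg t) = (tm.Neg (fst (tr t)), snd (tr t))"
| "tr (tm.Mul s t) = (tm.Mul (fst (tr s)) (fst (tr t)), tm.Mul (snd (tr s)) (snd (tr t)))"

definition dec :: "(nat \<Rightarrow> 'a::field) \<Rightarrow> nat \<Rightarrow> 'a" where
  "dec e v = e (4 * v + 4) / e (4 * v + 5)"

lemma tr_loc:
  assumes "\<forall>v. e (4 * v + 4) = e' (4 * v + 4) \<and> e (4 * v + 5) = e' (4 * v + 5)"
  shows "evt e (fst (tr t)) = evt e' (fst (tr t)) \<and> evt e (snd (tr t)) = evt e' (snd (tr t))"
  using assms by (induction t) auto

lemma tr_ok:
  fixes e :: "nat \<Rightarrow> 'a::field"
  assumes nz: "\<forall>v. e (4 * v + 5) \<noteq> 0"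
  shows "evt e (snd (tr t)) \<noteq> 0 \<and> evt e (fst (tr t)) / evt e (snd (tr t)) = evt (dec e) t"
proof (induction t)
  case (Var v) thus ?case using nz by (simp add: dec_def)
next
  case Zero thus ?case by simp
next
  case One thus ?case by simp
next
  case (Add s t)
  define n1 where "n1 = evt e (fst (tr s))"
  define d1 where "d1 = evt e (snd (tr s))"
  define n2 where "n2 = evt e (fst (tr t))"
  define d2 where "d2 = evt e (snd (tr t))"
  have h1: "d1 \<noteq> 0" "n1 / d1 = evt (dec e) s" using Add.IH(1) n1_def d1_def by auto
  have h2: "d2 \<noteq> 0" "n2 / d2 = evt (dec e) t" using Add.IH(2) n2_def d2_def by auto
  have "evt e (snd (tr (tm.Add s t))) = d1 * d2" by (simp add: d1_def d2_def)
  moreover have "evt e (fst (tr (tm.Add s t))) = n1 * d2 + n2 * d1" by (simp add: n1_def d1_def n2_def d2_def)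
  moreover have "(n1 * d2 + n2 * d1) / (d1 * d2) = n1 / d1 + n2 / d2"
    by (rule add_frac_eq[symmetric]) (use h1 h2 in auto)
  ultimately show ?case using h1 h2 by simp
next
  case (Neg t)
  thus ?case by (simp add: minus_divide_left)
next
  case (Mul s t)
  define n1 where "n1 = evt e (fst (tr s))"
  define d1 where "d1 = evt e (snd (tr s))"
  define n2 where "n2 = evt e (fst (tr t))"
  define d2 where "d2 = evt e (snd (tr t))"
  have h1: "d1 \<noteq> 0" "n1 / d1 = evt (dec e) s" using Mul.IH(1) n1_def d1_def by auto
  have h2: "d2 \<noteq> 0" "n2 / d2 = evt (dec e) t" using Mul.IH(2) n2_def d2_def by auto
  have "evt e (snd (tr (tm.Mul s t))) = d1 * d2" by (simp add: d1_def d2_def)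
  moreover have "evt e (fst (tr (tm.Mul s t))) = n1 * n2" by (simp add: n1_def n2_def)
  moreover have "(n1 * n2) / (d1 * d2) = (n1 / d1) * (n2 / d2)"
    by (rule times_divide_times_eq[symmetric])
  ultimately show ?case using h1 h2 by simp
qed

fun T :: "fm \<Rightarrow> fm" where
  "T (fm.Eq s t) = fm.Eq (tm.Mul (fst (tr s)) (snd (tr t))) (tm.Mul (fst (tr t)) (snd (tr s)))"
| "T (fm.Pred i t) = (if i = 0 then fm.Ex 1 (fm.Eq (fst (tr t)) (tm.Mul (snd (tr t)) (tm.Var 1)))
                      else Neg_fm (fm.Eq tm.Zero tm.Zero))"
| "T (Neg_fm f) = Neg_fm (T f)"
| "T (Conj f g) = Conj (T f) (T g)"
| "T (fm.Ex v f) = fm.Ex (4 * v + 4) (fm.Ex (4 * v + 5)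
      (Conj (Neg_fm (fm.Eq (tm.Var (4 * v + 5)) tm.Zero)) (T f)))"

lemma dec_upd:
  "dec (e(4 * v + 4 := p, 4 * v + 5 := q)) = (dec e)(v := p / q)"
proof
  fix w
  have a: "4 * w + 4 \<noteq> 4 * v + 5" "4 * w + 5 \<noteq> 4 * v + 4" by presburger+
  show "dec (e(4 * v + 4 := p, 4 * v + 5 := q)) w = ((dec e)(v := p / q)) w"
    using a by (cases "w = v") (auto simp: dec_def)
qed

lemma T_ok:
  fixes R :: "'a::field set"
  assumes FF: "fraction_field_of R"
  shows "(\<forall>v. e (4 * v + 5) \<noteq> 0) \<Longrightarrow> sat R [] e (T f) = sat UNIV [R] (dec e) f"
proof (induction f arbitrary: e)
  case (Eq s t)
  have hs: "evt e (snd (tr s)) \<noteq> 0" "evt e (fst (tr s)) / evt e (snd (tr s)) = evt (dec e) s"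
    using tr_ok[OF Eq.prems] by auto
  have ht: "evt e (snd (tr t)) \<noteq> 0" "evt e (fst (tr t)) / evt e (snd (tr t)) = evt (dec e) t"
    using tr_ok[OF Eq.prems] by auto
  have "(evt e (fst (tr s)) / evt e (snd (tr s)) = evt e (fst (tr t)) / evt e (snd (tr t))) =
        (evt e (fst (tr s)) * evt e (snd (tr t)) = evt e (fst (tr t)) * evt e (snd (tr s)))"
    by (rule frac_eq_eq[OF hs(1) ht(1)])
  thus ?case using hs(2) ht(2) by simp
next
  case (Pred i t)
  show ?case
  proof (cases "i = 0")
    case False thus ?thesis by simp
  next
    case True
    have hs: "evt e (snd (tr t)) \<noteq> 0" "evt e (fst (tr t)) / evt e (snd (tr t)) = evt (dec e) t"
      using tr_ok[OF Pred.prems] by auto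
    have loc: "evt (e(1 := w)) (fst (tr t)) = evt e (fst (tr t)) \<and>
               evt (e(1 := w)) (snd (tr t)) = evt e (snd (tr t))" for w
    proof (rule tr_loc)
      show "\<forall>v. (e(1 := w)) (4 * v + 4) = e (4 * v + 4) \<and> (e(1 := w)) (4 * v + 5) = e (4 * v + 5)"
        by simp
    qed
    have "sat R [] e (T (Pred i t)) \<longleftrightarrow> (\<exists>w\<in>R. evt e (fst (tr t)) = evt e (snd (tr t)) * w)"
      using True loc by simp
    also have "\<dots> \<longleftrightarrow> evt e (fst (tr t)) / evt e (snd (tr t)) \<in> R"
    proof
      assume "\<exists>w\<in>R. evt e (fst (tr t)) = evt e (snd (tr t)) * w"
      then obtain w where "w \<in> R" "evt e (fst (tr t)) = evt e (snd (tr t)) * w" by blast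
      thus "evt e (fst (tr t)) / evt e (snd (tr t)) \<in> R" using hs(1) by simp
    next
      assume h: "evt e (fst (tr t)) / evt e (snd (tr t)) \<in> R"
      have "evt e (fst (tr t)) = evt e (snd (tr t)) * (evt e (fst (tr t)) / evt e (snd (tr t)))"
        using hs(1) by simp
      thus "\<exists>w\<in>R. evt e (fst (tr t)) = evt e (snd (tr t)) * w" using h by blast
    qed
    also have "\<dots> \<longleftrightarrow> sat UNIV [R] (dec e) (Pred i t)" using True hs(2) by simp
    finally show ?thesis .
  qed
next
  case (Neg_fm f)
  thus ?case by simp
next
  case (Conj f g)
  thus ?case by simp
next
  case (Ex v f)
  have nz: "\<forall>w. (e(4 * v + 4 := p, 4 * v + 5 := q)) (4 * w + 5) \<noteq> 0" if "q \<noteq> 0" for p q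
  proof
    fix w
    have "4 * w + 5 \<noteq> 4 * v + 4" by presburger
    thus "(e(4 * v + 4 := p, 4 * v + 5 := q)) (4 * w + 5) \<noteq> 0"
      using that Ex.prems by (cases "w = v") auto
  qed
  have "sat R [] e (T (fm.Ex v f)) \<longleftrightarrow>
        (\<exists>p\<in>R. \<exists>q\<in>R. q \<noteq> 0 \<and> sat R [] (e(4 * v + 4 := p, 4 * v + 5 := q)) (T f))"
    by simp
  also have "\<dots> \<longleftrightarrow> (\<exists>p\<in>R. \<exists>q\<in>R. q \<noteq> 0 \<and> sat UNIV [R] ((dec e)(v := p / q)) f)"
    using Ex.IH[OF nz] dec_upd by metis
  also have "\<dots> \<longleftrightarrow> (\<exists>y. sat UNIV [R] ((dec e)(v := y)) f)"
    using FF unfolding fraction_field_of_def by metis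
  also have "\<dots> \<longleftrightarrow> sat UNIV [R] (dec e) (fm.Ex v f)" by simp
  finally show ?case .
qed


lemma common_denom:
  fixes R :: "'a::field set" and \<alpha> :: "nat \<Rightarrow> 'a"
  assumes FF: "fraction_field_of R"
  shows "\<exists>D\<in>R. D \<noteq> 0 \<and> (\<forall>i<n. D * \<alpha> i \<in> R)"
proof (induction n)
  case 0
  have "subring_of R" using FF by (simp add: fraction_field_of_def)
  hence "(1::'a) \<in> R" by (rule sr1)
  thus ?case by (intro bexI[of _ 1]) auto
next
  case (Suc n)
  have R: "subring_of R" using FF by (simp add: fraction_field_of_def)
  obtain D where D: "D \<in> R" "D \<noteq> 0" "\<forall>i<n. D * \<alpha> i \<in> R" using Suc.IH by blast
  obtain r s where rs: "r \<in> R" "s \<in> R" "s \<noteq> 0" "\<alpha> n = r / s"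
    using FF unfolding fraction_field_of_def by blast
  have "D * s \<in> R" using sr_mult[OF R D(1) rs(2)] .
  moreover have "D * s \<noteq> 0" using D(2) rs(3) by simp
  moreover have "\<forall>i<Suc n. D * s * \<alpha> i \<in> R"
  proof (intro allI impI)
    fix i assume i: "i < Suc n"
    show "D * s * \<alpha> i \<in> R"
    proof (cases "i = n")
      case True
      have sa: "s * \<alpha> n = r" using rs(3,4) by simp
      have "D * s * \<alpha> i = D * (s * \<alpha> n)" using True by (simp only: mult.assoc)
      hence eq: "D * s * \<alpha> i = D * r" using sa by simp
      show ?thesis unfolding eq by (rule sr_mult[OF R D(1) rs(1)])
    next
      case False
      hence "i < n" using i by simp
      hence "s * (D * \<alpha> i) \<in> R" using sr_mult[OF R rs(2)] D(3) by blast
      thus ?thesis by (simp add: ac_simps)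
    qed
  qed
  ultimately show ?case by blast
qed

lemma keys:
  fixes R V :: "'a::field set"
  assumes R: "subring_of R" and V: "valuation_ring V" and aR: "a \<in> R" and aV: "a \<notin> V"
    and \<alpha>1: "\<forall>i<n. \<alpha> i \<in> V" and \<alpha>2: "\<forall>i<n. \<forall>k<n. i \<noteq> k \<longrightarrow> \<alpha> i - \<alpha> k \<notin> R"
    and ijkl: "i < n" "j < n" "k < n" "l < n"
  shows "(\<alpha> i + a ^ Suc j - \<alpha> k \<in> R) \<longleftrightarrow> k = i"
    and "(\<alpha> i + a ^ Suc j - a ^ Suc l \<in> V) \<longleftrightarrow> l = j"
proof -
  have S: "subring_of V" by (rule vr_sub[OF V])
  have bR: "a ^ Suc j \<in> R" by (rule sr_pow[OF R aR])
  show "(\<alpha> i + a ^ Suc j - \<alpha> k \<in> R) \<longleftrightarrow> k = i"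
  proof
    assume h: "\<alpha> i + a ^ Suc j - \<alpha> k \<in> R"
    show "k = i"
    proof (rule ccontr)
      assume "k \<noteq> i"
      hence "\<alpha> i - \<alpha> k \<notin> R" using \<alpha>2 ijkl by auto
      moreover have "(\<alpha> i + a ^ Suc j - \<alpha> k) - a ^ Suc j \<in> R" using sr_diff[OF R h bR] .
      ultimately show False by simp
    qed
  next
    assume "k = i"
    thus "\<alpha> i + a ^ Suc j - \<alpha> k \<in> R" using bR by simp
  qed
  show "(\<alpha> i + a ^ Suc j - a ^ Suc l \<in> V) \<longleftrightarrow> l = j"
  proof
    assume h: "\<alpha> i + a ^ Suc j - a ^ Suc l \<in> V"
    show "l = j"
    proof (rule ccontr)
      assume "l \<noteq> j"
      hence "a ^ Suc j - a ^ Suc l \<notin> V" using beta_diff[OF V aV] by auto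
      moreover have "(\<alpha> i + a ^ Suc j - a ^ Suc l) - \<alpha> i \<in> V"
        using sr_diff[OF S h] \<alpha>1 ijkl by blast
      ultimately show False by simp
    qed
  next
    assume "l = j"
    thus "\<alpha> i + a ^ Suc j - a ^ Suc l \<in> V" using \<alpha>1 ijkl by simp
  qed
qed

lemma part1:
  fixes R V :: "'a::field set"
  assumes R: "subring_of R" and V: "valuation_ring V" and dp: "dp_minimal UNIV [R, V]"
  shows "R \<subseteq> V \<or> V \<subseteq> R"
proof (rule ccontr)
  assume "\<not> ?thesis"
  then obtain a b where aR: "a \<in> R" and aV: "a \<notin> V" and bV: "b \<in> V" and bR: "b \<notin> R" by blast
  define \<phi> where "\<phi> = fm.Pred 0 (tm.Add (tm.Var 0) (tm.Neg (tm.Var 1)))"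
  define \<psi> where "\<psi> = fm.Pred 1 (tm.Add (tm.Var 0) (tm.Neg (tm.Var 1)))"
  obtain n where nn: "\<not> ict2_pattern UNIV [R, V] \<phi> \<psi> n" using dp unfolding dp_minimal_def by blast
  obtain \<alpha> :: "nat \<Rightarrow> 'a" where \<alpha>1: "\<forall>i<n. \<alpha> i \<in> V" and \<alpha>2: "\<forall>i<n. \<forall>k<n. i \<noteq> k \<longrightarrow> \<alpha> i - \<alpha> k \<notin> R"
    using antichain[OF R V aR aV bV bR] by blast
  note K = keys[OF R V aR aV \<alpha>1 \<alpha>2]
  have A1: "\<forall>k<n. assignment_in UNIV (\<lambda>_::nat. \<alpha> k) \<and> assignment_in UNIV (\<lambda>_::nat. a ^ Suc k)"
    by (simp add: assignment_in_def)
  have A2: "\<forall>i<n. \<forall>j<n. \<alpha> i + a ^ Suc j \<in> UNIV \<and>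
     (\<forall>k<n. sat UNIV [R, V] ((\<lambda>_. \<alpha> k)(0 := \<alpha> i + a ^ Suc j)) \<phi> \<longleftrightarrow> k = i) \<and>
     (\<forall>l<n. sat UNIV [R, V] ((\<lambda>_. a ^ Suc l)(0 := \<alpha> i + a ^ Suc j)) \<psi> \<longleftrightarrow> l = j)"
  proof (intro allI impI conjI)
    fix i j assume "i < n" "j < n"
    show "\<alpha> i + a ^ Suc j \<in> UNIV" by simp
  next
    fix i j k assume ijk: "i < n" "j < n" "k < n"
    have "sat UNIV [R, V] ((\<lambda>_. \<alpha> k)(0 := \<alpha> i + a ^ Suc j)) \<phi> \<longleftrightarrow> \<alpha> i + a ^ Suc j - \<alpha> k \<in> R"
      by (simp add: \<phi>_def)
    thus "sat UNIV [R, V] ((\<lambda>_. \<alpha> k)(0 := \<alpha> i + a ^ Suc j)) \<phi> \<longleftrightarrow> k = i"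
      using K(1)[OF ijk ijk(1)] by simp
  next
    fix i j l assume ijl: "i < n" "j < n" "l < n"
    have "sat UNIV [R, V] ((\<lambda>_. a ^ Suc l)(0 := \<alpha> i + a ^ Suc j)) \<psi> \<longleftrightarrow> \<alpha> i + a ^ Suc j - a ^ Suc l \<in> V"
      by (simp add: \<psi>_def)
    thus "sat UNIV [R, V] ((\<lambda>_. a ^ Suc l)(0 := \<alpha> i + a ^ Suc j)) \<psi> \<longleftrightarrow> l = j"
      using K(2)[OF ijl(1,2,1,3)] by simp
  qed
  have "ict2_pattern UNIV [R, V] \<phi> \<psi> n"
    unfolding ict2_pattern_def
    apply (rule exI[of _ "\<lambda>k _. \<alpha> k"], rule exI[of _ "\<lambda>l _. a ^ Suc l"],
        rule exI[of _ "\<lambda>i j. \<alpha> i + a ^ Suc j"])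
    using A1 A2 by blast
  thus False using nn by blast
qed


lemma part2:
  fixes R V :: "'a::field set"
  assumes FF: "fraction_field_of R" and V: "valuation_ring V" and dp: "dp_minimal R []"
    and ed: "externally_definable UNIV [R] V"
  shows "R \<subseteq> V \<or> V \<subseteq> R"
proof (rule ccontr)
  have R: "subring_of R" using FF by (simp add: fraction_field_of_def)
  assume "\<not> ?thesis"
  then obtain a b where aR: "a \<in> R" and aV: "a \<notin> V" and bV: "b \<in> V" and bR: "b \<notin> R"
    unfolding subset_iff by blast
  obtain \<phi>0 where ext0: "\<forall>A. finite A \<and> A \<subseteq> UNIV \<longrightarrow>
      (\<exists>e. assignment_in UNIV e \<and> (\<forall>x\<in>A. x \<in> V \<longleftrightarrow> sat UNIV [R] (e(0 := x)) \<phi>0))"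
    using ed unfolding externally_definable_def by (elim conjE exE) (rule that)
  have ext: "\<exists>e. assignment_in UNIV e \<and> (\<forall>x\<in>A. x \<in> V \<longleftrightarrow> sat UNIV [R] (e(0 := x)) \<phi>0)"
    if "finite A" for A using ext0 that by simp
  define \<phi>' where "\<phi>' = fm.Ex 1 (fm.Eq (tm.Add (tm.Var 0) (tm.Neg (tm.Var 2))) (tm.Mul (tm.Var 3) (tm.Var 1)))"
  define \<psi>' where "\<psi>' = fm.Ex 4 (Conj (fm.Eq (tm.Var 4) (tm.Add (tm.Var 0) (tm.Neg (tm.Var 2)))) (T \<phi>0))"
  obtain n where nn: "\<not> ict2_pattern R [] \<phi>' \<psi>' n" using dp unfolding dp_minimal_def by blast
  obtain \<alpha> :: "nat \<Rightarrow> 'a" where \<alpha>1: "\<forall>i<n. \<alpha> i \<in> V" and \<alpha>2: "\<forall>i<n. \<forall>k<n. i \<noteq> k \<longrightarrow> \<alpha> i - \<alpha> k \<notin> R"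
    using antichain[OF R V aR aV bV bR] by blast
  note K = keys[OF R V aR aV \<alpha>1 \<alpha>2]
  obtain D where D: "D \<in> R" "D \<noteq> 0" "\<forall>i<n. D * \<alpha> i \<in> R" using common_denom[OF FF] by blast
  define A where "A = (\<lambda>(i, j, l). \<alpha> i + a ^ Suc j - a ^ Suc l) ` ({..<n} \<times> {..<n} \<times> {..<n})"
  have "finite A" by (simp add: A_def)
  then obtain e where eA: "\<forall>x\<in>A. x \<in> V \<longleftrightarrow> sat UNIV [R] (e(0 := x)) \<phi>0" using ext by blast
  have "\<forall>v. \<exists>p. fst p \<in> R \<and> snd p \<in> R \<and> snd p \<noteq> 0 \<and> e v = fst p / snd p"
  proof
    fix v
    obtain r s where "r \<in> R" "s \<in> R" "s \<noteq> 0" "e v = r / s"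
      using FF unfolding fraction_field_of_def by blast
    thus "\<exists>p. fst p \<in> R \<and> snd p \<in> R \<and> snd p \<noteq> 0 \<and> e v = fst p / snd p"
      by (intro exI[of _ "(r, s)"]) simp
  qed
  hence "\<exists>pr. \<forall>v. fst (pr v) \<in> R \<and> snd (pr v) \<in> R \<and> snd (pr v) \<noteq> 0 \<and> e v = fst (pr v) / snd (pr v)"
    by (rule choice)
  then obtain pr where pr: "\<And>v. fst (pr v) \<in> R \<and> snd (pr v) \<in> R \<and> snd (pr v) \<noteq> 0 \<and> e v = fst (pr v) / snd (pr v)"
    by blast
  define num where "num v = fst (pr v)" for v
  define den where "den v = snd (pr v)" for v
  have nd: "num v \<in> R" "den v \<in> R" "den v \<noteq> 0" "e v = num v / den v" for v
    using pr[of v] by (auto simp: num_def den_def)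
  define c where "c l = (\<lambda>u::nat. if u = 2 then D * a ^ Suc l else if u = 5 then D
      else if u mod 4 = 0 then num (u div 4 - 1) else if u mod 4 = 1 then den ((u - 1) div 4 - 1) else 0)"
    for l :: nat
  define bb where "bb k = (\<lambda>u::nat. if u = 2 then D * \<alpha> k else if u = 3 then D else 0)" for k
  define x where "x i j = D * (\<alpha> i + a ^ Suc j)" for i j
  have apR: "a ^ Suc j \<in> R" for j by (rule sr_pow[OF R aR])
  have DaR: "D * a ^ Suc j \<in> R" for j by (rule sr_mult[OF R D(1) apR])
  have xR: "x i j \<in> R" if "i < n" for i j
  proof -
    have "x i j = D * \<alpha> i + D * a ^ Suc j" by (simp add: x_def distrib_left)
    thus ?thesis using sr_add[OF R _ DaR] D(3) that by simp
  qed
  have bbA: "assignment_in R (bb k)" if "k < n" for k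
    unfolding assignment_in_def bb_def using D that sr0[OF R] by auto
  have cA: "assignment_in R (c l)" for l
    unfolding assignment_in_def c_def using D DaR nd sr0[OF R] by auto
  have c2: "c l 2 = D * a ^ Suc l" for l by (simp add: c_def)
  have c5: "c l 5 = D" for l by (simp add: c_def)
  have chi: "c l (4 * v + 4) = num v \<and> c l (4 * v + 5) = den v" if "v \<ge> 1" for l v
  proof -
    have "(4 * v + 4) mod 4 = 0" "(4 * v + 4) div 4 - 1 = v" "(4 * v + 5) mod 4 = 1"
      "(4 * v + 5 - 1) div 4 - 1 = v" by presburger+
    moreover have "4 * v + 4 \<noteq> 2" "4 * v + 4 \<noteq> 5" "4 * v + 5 \<noteq> 2" "4 * v + 5 \<noteq> 5"
      using that by presburger+
    ultimately show ?thesis unfolding c_def by simp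
  qed
  have phikey: "sat R [] ((bb k)(0 := x i j)) \<phi>' \<longleftrightarrow> k = i" if ijk: "i < n" "j < n" "k < n" for i j k
  proof -
    have "sat R [] ((bb k)(0 := x i j)) \<phi>' \<longleftrightarrow> (\<exists>w\<in>R. x i j + - (D * \<alpha> k) = D * w)"
      by (simp add: \<phi>'_def bb_def)
    also have "x i j + - (D * \<alpha> k) = D * (\<alpha> i + a ^ Suc j - \<alpha> k)"
      by (simp add: x_def algebra_simps)
    also have "(\<exists>w\<in>R. D * (\<alpha> i + a ^ Suc j - \<alpha> k) = D * w) \<longleftrightarrow> \<alpha> i + a ^ Suc j - \<alpha> k \<in> R"
      using D(2) by auto
    also have "\<dots> \<longleftrightarrow> k = i" using K(1)[OF ijk ijk(1)] .
    finally show ?thesis .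
  qed
  have psikey: "sat R [] ((c l)(0 := x i j)) \<psi>' \<longleftrightarrow> l = j" if ijl: "i < n" "j < n" "l < n" for i j l
  proof -
    define p0 where "p0 = x i j - D * a ^ Suc l"
    have p0R: "p0 \<in> R" unfolding p0_def using sr_diff[OF R xR[OF ijl(1)] DaR] .
    define env where "env = (c l)(0 := x i j, 4 := p0)"
    have "sat R [] ((c l)(0 := x i j)) \<psi>' \<longleftrightarrow>
        (\<exists>p\<in>R. p = x i j + - (D * a ^ Suc l) \<and> sat R [] ((c l)(0 := x i j, 4 := p)) (T \<phi>0))"
      by (simp add: \<psi>'_def c2)
    also have "\<dots> \<longleftrightarrow> sat R [] env (T \<phi>0)" using p0R by (auto simp: env_def p0_def)
    also have "\<dots> \<longleftrightarrow> sat UNIV [R] (dec env) \<phi>0"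
    proof (rule T_ok[OF FF])
      show "\<forall>v. env (4 * v + 5) \<noteq> 0"
      proof
        fix v :: nat
        have ne: "4 * v + 5 \<noteq> 0" "4 * v + 5 \<noteq> 4" by presburger+
        show "env (4 * v + 5) \<noteq> 0"
        proof (cases "v = 0")
          case True thus ?thesis using c5 D(2) by (simp add: env_def)
        next
          case False
          hence "v \<ge> 1" by simp
          thus ?thesis using chi[of v l] ne nd(3)[of v] by (simp add: env_def)
        qed
      qed
    qed
    also have "dec env = e(0 := p0 / D)"
    proof
      fix w :: nat
      show "dec env w = (e(0 := p0 / D)) w"
      proof (cases "w = 0")
        case True thus ?thesis using c5 by (simp add: env_def dec_def)
      next
        case False
        hence w1: "w \<ge> 1" by simp
        have ne: "4 * w + 4 \<noteq> 0" "4 * w + 4 \<noteq> 4" "4 * w + 5 \<noteq> 0" "4 * w + 5 \<noteq> 4"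
          using w1 by presburger+
        have "dec env w = num w / den w" using chi[OF w1, of l] ne by (simp add: env_def dec_def)
        thus ?thesis using nd(4)[of w] False by simp
      qed
    qed
    also have "p0 / D = \<alpha> i + a ^ Suc j - a ^ Suc l"
    proof -
      have "p0 = D * (\<alpha> i + a ^ Suc j - a ^ Suc l)" by (simp add: p0_def x_def algebra_simps)
      thus ?thesis using D(2) by simp
    qed
    also have "sat UNIV [R] (e(0 := \<alpha> i + a ^ Suc j - a ^ Suc l)) \<phi>0 \<longleftrightarrow>
               \<alpha> i + a ^ Suc j - a ^ Suc l \<in> V"
    proof -
      have "\<alpha> i + a ^ Suc j - a ^ Suc l \<in> A" unfolding A_def using ijl by force
      thus ?thesis using eA by blast
    qed
    also have "\<dots> \<longleftrightarrow> l = j" using K(2)[OF ijl(1,2,1,3)] .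
    finally show ?thesis .
  qed
  have "ict2_pattern R [] \<phi>' \<psi>' n"
    unfolding ict2_pattern_def
    apply (rule exI[of _ bb], rule exI[of _ c], rule exI[of _ x])
    using bbA cA xR phikey psikey by blast
  thus False using nn by blast
qed

theorem mainTheorem19:
  fixes R Ov :: "'a::field set"
  assumes "fraction_field_of R" and "valuation_ring Ov"
  shows "(dp_minimal UNIV [R, Ov] \<longrightarrow> R \<subseteq> Ov \<or> Ov \<subseteq> R) \<and>
         (dp_minimal R [] \<and> externally_definable UNIV [R] Ov \<longrightarrow> R \<subseteq> Ov \<or> Ov \<subseteq> R)"
proof (intro conjI impI)
  assume "dp_minimal UNIV [R, Ov]"
  moreover have "subring_of R" using assms(1) by (simp add: fraction_field_of_def)
  ultimately show "R \<subseteq> Ov \<or> Ov \<subseteq> R" using part1 assms(2) by blast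
next
  assume "dp_minimal R [] \<and> externally_definable UNIV [R] Ov"
  thus "R \<subseteq> Ov \<or> Ov \<subseteq> R" using part2 assms by blast
qed

end
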